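(* In an almost zero-dimensional space $X$, every closed $\sigma$C-set is a C-set.
   Context: All spaces are separable and metrizable. A subset $A$ of a space $X$ is a C-set in $X$ if $A$ is an intersection of clopen subsets of $X$; a $\sigma$C-set is a countable union of C-sets in $X$. $X$ is almost zero-dimensional if every point of $X$ has a neighborhood basis consisting of C-sets in $X$. *)

theory Defs
  imports "HOL-Analysis.Analysis"
begin

text \<open>A C-set in X: an intersection of clopen subsets of X (the empty intersection being X).\<close>
definition C_set :: "'a topology \<Rightarrow> 'a set \<Rightarrow> bool" where
  "C_set X A \<longleftrightarrow>
     (\<exists>\<U>. (\<forall>U\<in>\<U>. closedin X U \<and> openin X U) \<and> A = topspace X \<inter> \<Inter>\<U>)"

definition sigmaC_set :: "'a topology \<Rightarrow> 'a set \<Rightarrow> bool" where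
  "sigmaC_set X A \<longleftrightarrow>
     (\<exists>\<A>. countable \<A> \<and> (\<forall>B\<in>\<A>. C_set X B) \<and> A = \<Union>\<A>)"

definition almost_zero_dimensional :: "'a topology \<Rightarrow> bool" where
  "almost_zero_dimensional X \<longleftrightarrow> neighbourhood_base_of (C_set X) X"

end

theory Submission
  imports Defs
begin

lemma (in Metric_space) sep_sc:
  assumes "separable_space mtopology" shows "second_countable mtopology"
proof -
  obtain C where C: "countable C" "C \<subseteq> M" "mtopology closure_of C = topspace mtopology"
    using assms unfolding separable_space_def by (metis topspace_mtopology)
  define B where "B = (\<lambda>(c,n). mball c (1/ real (Suc n))) ` (C \<times> (UNIV::nat set))"
  show ?thesis unfolding second_countable_def
  proof (intro exI conjI ballI allI impI)
    show "countable B" unfolding B_def using C(1) by simp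
    show "openin mtopology V" if "V \<in> B" for V using that by (auto simp: B_def)
    fix U x assume ux: "openin mtopology U \<and> x \<in> U"
    then obtain r where r: "r > 0" "mball x r \<subseteq> U" by (meson openin_mtopology)
    have xM: "x \<in> M" using ux openin_mtopology by blast
    obtain n where n: "inverse (real (Suc n)) < r/2" using reals_Archimedean r(1)
      by (metis half_gt_zero_iff)
    have "C \<inter> mball x (1/ real (Suc n)) \<noteq> {}"
      using C(3) xM unfolding dense_intersects_open by (metis centre_in_mball_iff empty_iff
            of_nat_0_less_iff openin_mball zero_less_Suc zero_less_divide_1_iff inf_commute)
    then obtain c where c: "c \<in> C" "d x c < 1/ real (Suc n)" using xM by auto
    have cM: "c \<in> M" using c C(2) by auto
    show "\<exists>V\<in>B. x \<in> V \<and> V \<subseteq> U"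
    proof (intro bexI conjI)
      show "mball c (1/ real (Suc n)) \<in> B" unfolding B_def using c(1) by force
      show "x \<in> mball c (1/ real (Suc n))" using c xM cM by (simp add: commute)
      show "mball c (1/ real (Suc n)) \<subseteq> U"
      proof
        fix y assume "y \<in> mball c (1/ real (Suc n))"
        then have y: "y \<in> M" "d c y < 1/ real (Suc n)" by auto
        have "d x y \<le> d x c + d c y" using triangle xM cM y by blast
        also have "\<dots> < r" using c(2) y(2) n by (simp add: inverse_eq_divide)
        finally show "y \<in> U" using r(2) xM y by auto
      qed
    qed
  qed
qed

lemma metr_sep_sc:
  assumes "metrizable_space X" "separable_space X" shows "second_countable X"
proof -
  obtain M d where Md: "Metric_space M d" "X = Metric_space.mtopology M d"
    using assms(1) unfolding metrizable_space_def by blast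
  show ?thesis using Metric_space.sep_sc[OF Md(1)] assms(2) Md(2) by simp
qed

lemma sc_subcover:
  assumes "second_countable X" "\<forall>G\<in>\<G>. openin X G" "S \<subseteq> \<Union>\<G>" "S \<noteq> {}"
  shows "\<exists>g::nat\<Rightarrow>'a set. range g \<subseteq> \<G> \<and> S \<subseteq> \<Union>(range g)"
proof -
  obtain \<B> where B: "countable \<B>" "\<forall>V\<in>\<B>. openin X V"
    "\<forall>U x. openin X U \<and> x \<in> U \<longrightarrow> (\<exists>V\<in>\<B>. x \<in> V \<and> V \<subseteq> U)"
    using assms(1) unfolding second_countable_def by metis
  define B' where "B' = {b\<in>\<B>. \<exists>G\<in>\<G>. b \<subseteq> G}"
  have cov: "\<exists>b\<in>B'. y \<in> b" if yS: "y \<in> S" for y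
  proof -
    obtain G where "G \<in> \<G>" "y \<in> G" using assms(3) yS by auto
    then obtain b where "b \<in> \<B>" "y \<in> b" "b \<subseteq> G" using B(3) assms(2) by meson
    then show ?thesis using \<open>G \<in> \<G>\<close> unfolding B'_def by blast
  qed
  have cB': "countable B'" by (rule countable_subset[OF _ B(1)]) (auto simp: B'_def)
  have ne: "B' \<noteq> {}" using cov assms(4) by blast
  define f where "f b = (SOME G. G \<in> \<G> \<and> b \<subseteq> G)" for b
  have f: "f b \<in> \<G> \<and> b \<subseteq> f b" if bB': "b \<in> B'" for b
  proof -
    obtain G where "G \<in> \<G>" "b \<subseteq> G" using bB' unfolding B'_def by blast
    then have "\<exists>G. G \<in> \<G> \<and> b \<subseteq> G" by blast
    then show ?thesis unfolding f_def by (rule someI_ex)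
  qed
  define g where "g n = f (from_nat_into B' n)" for n
  show ?thesis
  proof (intro exI conjI)
    show "range g \<subseteq> \<G>" using f from_nat_into[OF ne] g_def by auto
    show "S \<subseteq> \<Union>(range g)"
    proof
      fix y assume "y \<in> S"
      then obtain b where b: "b \<in> B'" "y \<in> b" using cov by blast
      then obtain n where "b = from_nat_into B' n" using from_nat_into_surj[OF cB'] by blast
      then show "y \<in> \<Union>(range g)" using f[OF b(1)] b(2) g_def by auto
    qed
  qed
qed

lemma clopen_least:
  fixes g :: "nat \<Rightarrow> 'a set"
  assumes "\<forall>i. closedin X (g i) \<and> openin X (g i)" "topspace X \<subseteq> \<Union>(range g)"
  shows "openin X {y \<in> topspace X. P (LEAST i. y \<in> g i)}"
proof (subst openin_subopen, intro ballI)
  fix y assume y: "y \<in> {y \<in> topspace X. P (LEAST i. y \<in> g i)}"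
  define i where "i = (LEAST i. y \<in> g i)"
  obtain j0 where "y \<in> g j0" using y assms(2) by auto
  then have yi: "y \<in> g i" unfolding i_def by (rule LeastI)
  have ylt: "y \<notin> g j" if "j < i" for j using that not_less_Least i_def by blast
  define T where "T = g i - (\<Union>j\<in>{..<i}. g j)"
  have "openin X T" unfolding T_def
    using assms(1) by (intro openin_diff closedin_Union) auto
  moreover have "y \<in> T" using yi ylt T_def by auto
  moreover have "T \<subseteq> {y \<in> topspace X. P (LEAST i. y \<in> g i)}"
  proof
    fix z assume z: "z \<in> T"
    have "(LEAST i. z \<in> g i) = i"
    proof (rule Least_equality)
      show "z \<in> g i" using z T_def by auto
      show "i \<le> m" if "z \<in> g m" for m using that z T_def by (meson lessThan_iff not_le UN_I DiffD2)
    qed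
    moreover have "z \<in> topspace X" using z T_def assms(1) openin_subset by blast
    ultimately show "z \<in> {y \<in> topspace X. P (LEAST i. y \<in> g i)}" using y i_def by simp
  qed
  ultimately show "\<exists>T. openin X T \<and> y \<in> T \<and> T \<subseteq> {y \<in> topspace X. P (LEAST i. y \<in> g i)}"
    by blast
qed

lemma clopen_least2:
  fixes g :: "nat \<Rightarrow> 'a set"
  assumes "\<forall>i. closedin X (g i) \<and> openin X (g i)" "topspace X \<subseteq> \<Union>(range g)"
  shows "closedin X {y \<in> topspace X. P (LEAST i. y \<in> g i)} \<and> openin X {y \<in> topspace X. P (LEAST i. y \<in> g i)}"
proof
  show "openin X {y \<in> topspace X. P (LEAST i. y \<in> g i)}" using clopen_least[OF assms] .
  have "topspace X - {y \<in> topspace X. P (LEAST i. y \<in> g i)} = {y \<in> topspace X. \<not> P (LEAST i. y \<in> g i)}"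
    by auto
  then show "closedin X {y \<in> topspace X. P (LEAST i. y \<in> g i)}"
    unfolding closedin_def using clopen_least[OF assms, of "\<lambda>i. \<not> P i"] by auto
qed

lemma C_set_point:
  assumes "C_set X B" "x \<in> topspace X" "x \<notin> B"
  shows "\<exists>Q. closedin X Q \<and> openin X Q \<and> B \<subseteq> Q \<and> x \<notin> Q"
proof -
  obtain \<U> where U: "\<forall>U\<in>\<U>. closedin X U \<and> openin X U" "B = topspace X \<inter> \<Inter>\<U>"
    using assms(1) unfolding C_set_def by blast
  then obtain U where "U \<in> \<U>" "x \<notin> U" using assms(2,3) by blast
  then show ?thesis using U by blast
qed

lemma C_set_sep:
  assumes sc: "second_countable X" and "C_set X B" "C_set X N" "B \<inter> N = {}"
  shows "\<exists>Q. closedin X Q \<and> openin X Q \<and> B \<subseteq> Q \<and> Q \<inter> N = {}"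
proof -
  obtain \<U> where U: "\<forall>U\<in>\<U>. closedin X U \<and> openin X U" "B = topspace X \<inter> \<Inter>\<U>"
    using assms(2) unfolding C_set_def by blast
  obtain \<V> where V: "\<forall>U\<in>\<V>. closedin X U \<and> openin X U" "N = topspace X \<inter> \<Inter>\<V>"
    using assms(3) unfolding C_set_def by blast
  show ?thesis
  proof (cases "topspace X = {}")
    case True
    then show ?thesis using U(2) by auto
  next
    case False
    define \<G> where "\<G> = (\<lambda>U. topspace X - U) ` \<U> \<union> (\<lambda>U. topspace X - U) ` \<V>"
    have Gc: "\<forall>G\<in>\<G>. closedin X G \<and> openin X G"
      using U(1) V(1) unfolding \<G>_def by auto
    have "topspace X \<subseteq> \<Union>\<G>"
    proof
      fix y assume y: "y \<in> topspace X"
      then have "y \<notin> B \<or> y \<notin> N" using assms(4) by auto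
      then show "y \<in> \<Union>\<G>" using y U(2) V(2) unfolding \<G>_def by auto
    qed
    then obtain g :: "nat \<Rightarrow> 'a set" where g: "range g \<subseteq> \<G>" "topspace X \<subseteq> \<Union>(range g)"
      using sc_subcover[OF sc _ _ False] Gc by meson
    have gc: "\<forall>i. closedin X (g i) \<and> openin X (g i)" using g(1) Gc by auto
    define Q where "Q = {y \<in> topspace X. g (LEAST i. y \<in> g i) \<in> (\<lambda>U. topspace X - U) ` \<V>}"
    have Qc: "closedin X Q \<and> openin X Q" unfolding Q_def by (rule clopen_least2[OF gc g(2)])
    have ing: "y \<in> g (LEAST i. y \<in> g i)" if yt0: "y \<in> topspace X" for y
    proof -
      obtain j0 where "y \<in> g j0" using yt0 g(2) by auto
      then show ?thesis by (rule LeastI)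
    qed
    have "B \<subseteq> Q"
    proof
      fix b assume b: "b \<in> B"
      then have bt: "b \<in> topspace X" using U(2) by auto
      have "g (LEAST i. b \<in> g i) \<in> \<G>" using g(1) by auto
      moreover have "g (LEAST i. b \<in> g i) \<notin> (\<lambda>U. topspace X - U) ` \<U>"
        using ing[OF bt] b U(2) by auto
      ultimately show "b \<in> Q" unfolding Q_def \<G>_def using bt by auto
    qed
    moreover have "Q \<inter> N = {}"
    proof -
      have "y \<notin> N" if yQ: "y \<in> Q" for y
      proof -
        have yt: "y \<in> topspace X" using yQ Q_def by auto
        obtain V0 where "V0 \<in> \<V>" "g (LEAST i. y \<in> g i) = topspace X - V0"
          using yQ Q_def by auto
        then show ?thesis using ing[OF yt] V(2) by auto
      qed
      then show ?thesis by blast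
    qed
    ultimately show ?thesis using Qc by blast
  qed
qed

lemma C_set_sep_finite:
  fixes n :: nat
  assumes sc: "second_countable X" and B: "C_set X B" and x: "x \<in> topspace X" "x \<notin> B"
    and N: "\<forall>k. C_set X (N k)" "\<forall>k. B \<inter> N k = {}"
  shows "\<exists>Q. closedin X Q \<and> openin X Q \<and> B \<subseteq> Q \<and> x \<notin> Q \<and> (\<forall>k\<le>n. Q \<inter> N k = {})"
proof (induction n)
  case 0
  obtain Q0 where Q0: "closedin X Q0" "openin X Q0" "B \<subseteq> Q0" "x \<notin> Q0"
    using C_set_point[OF B x] by blast
  obtain Q1 where Q1: "closedin X Q1" "openin X Q1" "B \<subseteq> Q1" "Q1 \<inter> N 0 = {}"
    using C_set_sep[OF sc B N(1)[rule_format, of 0] N(2)[rule_format, of 0]] by blast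
  have "closedin X (Q0 \<inter> Q1)" using Q0(1) Q1(1) by (rule closedin_Int)
  moreover have "openin X (Q0 \<inter> Q1)" using Q0(2) Q1(2) by (rule openin_Int)
  moreover have "\<forall>k\<le>0. (Q0 \<inter> Q1) \<inter> N k = {}" using Q1(4) by blast
  ultimately show ?case using Q0(3,4) Q1(3) by blast
next
  case (Suc n)
  then obtain Q0 where Q0: "closedin X Q0" "openin X Q0" "B \<subseteq> Q0" "x \<notin> Q0" "\<forall>k\<le>n. Q0 \<inter> N k = {}"
    by blast
  obtain Q1 where Q1: "closedin X Q1" "openin X Q1" "B \<subseteq> Q1" "Q1 \<inter> N (Suc n) = {}"
    using C_set_sep[OF sc B N(1)[rule_format, of "Suc n"] N(2)[rule_format, of "Suc n"]] by blast
  have "closedin X (Q0 \<inter> Q1)" using Q0(1) Q1(1) by (rule closedin_Int)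
  moreover have "openin X (Q0 \<inter> Q1)" using Q0(2) Q1(2) by (rule openin_Int)
  moreover have "\<forall>k\<le>Suc n. (Q0 \<inter> Q1) \<inter> N k = {}"
  proof (intro allI impI)
    fix k assume "k \<le> Suc n"
    then consider "k \<le> n" | "k = Suc n" by linarith
    then show "(Q0 \<inter> Q1) \<inter> N k = {}" using Q0(5) Q1(4) by cases blast+
  qed
  ultimately show ?case using Q0(3,4) Q1(3) by blast
qed

lemma key:
  assumes sc: "second_countable X" and azd: "almost_zero_dimensional X"
    and A: "closedin X A" "sigmaC_set X A" and x: "x \<in> topspace X" "x \<notin> A"
  shows "\<exists>U. closedin X U \<and> openin X U \<and> A \<subseteq> U \<and> x \<notin> U"
proof -
  obtain \<A> where AA: "countable \<A>" "\<forall>B\<in>\<A>. C_set X B" "A = \<Union>\<A>"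
    using A(2) unfolding sigmaC_set_def by blast
  show ?thesis
  proof (cases "\<A> = {}")
    case True
    then show ?thesis using AA(3) by auto
  next
    case False
    define a where "a n = from_nat_into \<A> n" for n
    have aC: "\<forall>n. C_set X (a n)" using AA(2) from_nat_into[OF False] a_def by auto
    have Aa: "A = \<Union>(range a)" using AA(3) range_from_nat_into[OF False AA(1)] a_def by auto
    define S where "S = topspace X - A"
    have Sopen: "openin X S" using A(1) S_def by (simp add: openin_diff)
    define \<G> where "\<G> = {W0. openin X W0 \<and> (\<exists>N. C_set X N \<and> W0 \<subseteq> N \<and> N \<subseteq> S)}"
    have "S \<subseteq> \<Union>\<G>"
    proof
      fix y assume "y \<in> S"
      then obtain U V where "openin X U" "C_set X V" "y \<in> U" "U \<subseteq> V" "V \<subseteq> S"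
        using azd Sopen unfolding almost_zero_dimensional_def neighbourhood_base_of by meson
      then show "y \<in> \<Union>\<G>" unfolding \<G>_def by blast
    qed
    moreover have "S \<noteq> {}" using x S_def by auto
    moreover have Gop: "\<forall>G\<in>\<G>. openin X G" unfolding \<G>_def by blast
    ultimately obtain ob :: "nat \<Rightarrow> 'a set" where ob: "range ob \<subseteq> \<G>" "S \<subseteq> \<Union>(range ob)"
      using sc_subcover[OF sc Gop] by meson
    have "\<forall>k. \<exists>N. C_set X N \<and> ob k \<subseteq> N \<and> N \<subseteq> S" using ob(1) unfolding \<G>_def by blast
    then obtain N where N: "\<forall>k. C_set X (N k) \<and> ob k \<subseteq> N k \<and> N k \<subseteq> S" by metis
    have oopen: "\<forall>k. openin X (ob k)" using ob(1) unfolding \<G>_def by blast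
    have "\<forall>n. \<exists>Q. closedin X Q \<and> openin X Q \<and> a n \<subseteq> Q \<and> x \<notin> Q \<and> (\<forall>k\<le>n. Q \<inter> N k = {})"
    proof
      fix n
      have anA: "a n \<subseteq> A" using Aa by blast
      have NC: "\<forall>k. C_set X (N k)" using N by blast
      have "\<forall>k. a n \<inter> N k = {}"
      proof
        fix k
        note anA
        moreover have "N k \<subseteq> topspace X - A" using N unfolding S_def by blast
        ultimately show "a n \<inter> N k = {}" by blast
      qed
      moreover have "x \<notin> a n" using x(2) anA by blast
      ultimately show "\<exists>Q. closedin X Q \<and> openin X Q \<and> a n \<subseteq> Q \<and> x \<notin> Q \<and> (\<forall>k\<le>n. Q \<inter> N k = {})"
        using C_set_sep_finite[OF sc aC[rule_format] x(1) _ NC] by blast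
    qed
    then obtain P where P: "\<forall>n. closedin X (P n) \<and> openin X (P n) \<and> a n \<subseteq> P n \<and> x \<notin> P n \<and> (\<forall>k\<le>n. P n \<inter> N k = {})"
      by metis
    define U where "U = \<Union>(range P)"
    have Uopen: "openin X U" unfolding U_def using P by (intro openin_Union) auto
    have Usub: "U \<subseteq> topspace X" using Uopen openin_subset by blast
    have AU: "A \<subseteq> U"
    proof
      fix z assume "z \<in> A"
      then obtain n where "z \<in> a n" using Aa by blast
      then show "z \<in> U" using P unfolding U_def by blast
    qed
    have "openin X (topspace X - U)"
    proof (subst openin_subopen, intro ballI)
      fix y assume y: "y \<in> topspace X - U"
      then have "y \<in> S" using AU S_def by auto
      then obtain k where k: "y \<in> ob k" using ob(2) by auto
      define T where "T = ob k - (\<Union>j\<in>{..<k}. P j)"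
      have "openin X T" unfolding T_def using oopen P by (intro openin_diff closedin_Union) auto
      moreover have "y \<in> T" using y k U_def T_def by auto
      moreover have "T \<subseteq> topspace X - U"
      proof
        fix z assume z: "z \<in> T"
        have zt: "z \<in> topspace X" using z T_def oopen openin_subset by blast
        have "z \<notin> P j" for j
        proof (cases "j < k")
          case True then show ?thesis using z T_def by auto
        next
          case False
          then have "P j \<inter> N k = {}" using P by auto
          moreover have "z \<in> N k" using z T_def N by auto
          ultimately show ?thesis by auto
        qed
        then show "z \<in> topspace X - U" using zt U_def by auto
      qed
      ultimately show "\<exists>T. openin X T \<and> y \<in> T \<and> T \<subseteq> topspace X - U" by blast
    qed
    then have "closedin X U" using Usub unfolding closedin_def by blast
    moreover have "x \<notin> U" using P U_def by auto
    ultimately show ?thesis using Uopen AU by blast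
  qed
qed

theorem theorem4p4:
  fixes X :: "'a topology" and A :: "'a set"
  assumes "metrizable_space X" and "separable_space X"
    and "almost_zero_dimensional X"
    and "closedin X A" and "sigmaC_set X A"
  shows "C_set X A"
proof -
  have sc: "second_countable X" using metr_sep_sc assms(1,2) by blast
  define \<U> where "\<U> = {U. closedin X U \<and> openin X U \<and> A \<subseteq> U}"
  have "A = topspace X \<inter> \<Inter>\<U>"
  proof
    show "A \<subseteq> topspace X \<inter> \<Inter>\<U>" using assms(4) closedin_subset \<U>_def by auto
    show "topspace X \<inter> \<Inter>\<U> \<subseteq> A"
    proof
      fix y assume y: "y \<in> topspace X \<inter> \<Inter>\<U>"
      show "y \<in> A"
      proof (rule ccontr)
        assume "y \<notin> A"
        then obtain U where "closedin X U" "openin X U" "A \<subseteq> U" "y \<notin> U"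
          using key[OF sc assms(3,4,5)] y by blast
        then show False using y \<U>_def by auto
      qed
    qed
  qed
  moreover have "\<forall>U\<in>\<U>. closedin X U \<and> openin X U" using \<U>_def by auto
  ultimately show ?thesis unfolding C_set_def by blast
qed

end
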